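(* The cometric $g^{ij}(u):=\sum_{k,l}g^{kl}(p)\frac{\partial u_i}{\partial p_k}\frac{\partial u_j}{\partial p_l}$, where $g^{kl}(p)=\frac{1-\delta^{kl}}{p_kp_l}$, can be written in terms of the invariant polynomials $u_1,\dots,u_n$ and is well defined on the quotient $\mathbb{C}^n/B_n$. Moreover, for each $i,j$, $g^{ij}(u)$ is a homogeneous polynomial in the $p$-variables of degree $2i+2j-4$, which depends at most linearly on $u_{n-1}$. In particular $g^{11}(u)=4(n^2-n)$.
   Context: $n\ge2$. $B_n$ acts on $\mathbb{C}^n$ (coordinates $p_1,\dots,p_n$) by permutations and sign changes of coordinates. $u_k=\sum_{1\le i_1<\dots<i_k\le n}p_{i_1}^2\cdots p_{i_k}^2$ for $k=1,\dots,n$ (elementary symmetric polynomials in $p_1^2,\dots,p_n^2$), a set of basic invariants; $u_k$ is homogeneous of degree $2k$ in $p$. *)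

theory Defs
  imports "HOL-Analysis.Analysis" "HOL-Library.Poly_Mapping" "HOL-Combinatorics.Permutations"
begin

(* Points of C^n: functions p :: nat => complex, coordinates p 1, ..., p n. *)

definition u_inv :: "nat \<Rightarrow> nat \<Rightarrow> (nat \<Rightarrow> complex) \<Rightarrow> complex" where
  "u_inv n k p = (\<Sum>S | S \<subseteq> {1..n} \<and> card S = k. \<Prod>i\<in>S. (p i)^2)"

definition pderiv_c :: "nat \<Rightarrow> ((nat \<Rightarrow> complex) \<Rightarrow> complex) \<Rightarrow> (nat \<Rightarrow> complex) \<Rightarrow> complex" where
  "pderiv_c k f p = deriv (\<lambda>t. f (p(k := t))) (p k)"

definition metric_g :: "nat \<Rightarrow> nat \<Rightarrow> (nat \<Rightarrow> complex) \<Rightarrow> complex" where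
  "metric_g k l p = (1 - (if k = l then 1 else 0)) / (p k * p l)"

definition cometric :: "nat \<Rightarrow> nat \<Rightarrow> nat \<Rightarrow> (nat \<Rightarrow> complex) \<Rightarrow> complex" where
  "cometric n i j p = (\<Sum>k\<in>{1..n}. \<Sum>l\<in>{1..n}.
      metric_g k l p * pderiv_c k (u_inv n i) p * pderiv_c l (u_inv n j) p)"

(* multivariate polynomials as finitely supported maps from monomials to coefficients;
   evaluation at x :: nat => complex *)
definition mpoly_eval :: "((nat \<Rightarrow>\<^sub>0 nat) \<Rightarrow>\<^sub>0 complex) \<Rightarrow> (nat \<Rightarrow> complex) \<Rightarrow> complex" where
  "mpoly_eval P x = (\<Sum>m\<in>Poly_Mapping.keys P.
      Poly_Mapping.lookup P m * (\<Prod>v\<in>Poly_Mapping.keys m. x v ^ Poly_Mapping.lookup m v))"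

end

theory Submission
  imports Defs
begin



definition esym :: "nat set \<Rightarrow> nat \<Rightarrow> (nat \<Rightarrow> complex) \<Rightarrow> complex" where
  "esym I a x = (\<Sum>S | S \<subseteq> I \<and> card S = a. \<Prod>i\<in>S. x i)"

lemma u_inv_esym: "u_inv n k p = esym {1..n} k (\<lambda>i. (p i)^2)"
  by (simp add: u_inv_def esym_def)

lemma esym_cong: "(\<And>i. i \<in> I \<Longrightarrow> x i = y i) \<Longrightarrow> esym I a x = esym I a y"
  unfolding esym_def by (intro sum.cong refl prod.cong) auto

lemma esym_0: "finite I \<Longrightarrow> esym I 0 x = 1"
proof -
  assume "finite I"
  have "{S. S \<subseteq> I \<and> card S = 0} = {{}}" using \<open>finite I\<close> by (auto dest: finite_subset)
  then show ?thesis by (simp add: esym_def)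
qed

lemma esym_big: "finite I \<Longrightarrow> card I < a \<Longrightarrow> esym I a x = 0"
proof -
  assume f: "finite I" and c: "card I < a"
  have "{S. S \<subseteq> I \<and> card S = a} = {}"
  proof -
    { fix S assume "S \<subseteq> I" "card S = a"
      then have "card S \<le> card I" using card_mono[OF f] by blast
      with c \<open>card S = a\<close> have False by simp }
    then show ?thesis by blast
  qed
  then show ?thesis unfolding esym_def by (metis sum.empty)
qed

lemma esym_insert:
  assumes f: "finite I" and k: "k \<notin> I"
  shows "esym (insert k I) (Suc a) x = esym I (Suc a) x + x k * esym I a x"
proof -
  let ?A = "{S. S \<subseteq> I \<and> card S = Suc a}"
  let ?B = "{S. S \<subseteq> I \<and> card S = a}"
  have fin: "finite {S. S \<subseteq> insert k I}" using f by simp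
  have eq: "{S. S \<subseteq> insert k I \<and> card S = Suc a} = ?A \<union> insert k ` ?B"
  proof (rule set_eqI, rule iffI)
    fix S assume "S \<in> {S. S \<subseteq> insert k I \<and> card S = Suc a}"
    then have S: "S \<subseteq> insert k I" "card S = Suc a" by auto
    show "S \<in> ?A \<union> insert k ` ?B"
    proof (cases "k \<in> S")
      case True
      have "S - {k} \<in> ?B" using S True f
        by (auto simp: card_Diff_singleton)
      moreover have "S = insert k (S - {k})" using True by auto
      ultimately show ?thesis by blast
    next
      case False
      then show ?thesis using S by auto
    qed
  next
    fix S assume "S \<in> ?A \<union> insert k ` ?B"
    then show "S \<in> {S. S \<subseteq> insert k I \<and> card S = Suc a}"
    proof
      assume "S \<in> ?A" then show ?thesis by auto
    next
      assume "S \<in> insert k ` ?B"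
      then obtain T where T: "T \<subseteq> I" "card T = a" "S = insert k T" by auto
      have "finite T" using T f finite_subset by blast
      moreover have "k \<notin> T" using T k by auto
      ultimately show ?thesis using T k by auto
    qed
  qed
  have finA: "finite ?A" using f by simp
  have finB: "finite ?B" using f by simp
  have disj: "?A \<inter> insert k ` ?B = {}" using k by auto
  have inj: "inj_on (insert k) ?B" unfolding inj_on_def
  proof (intro ballI impI)
    fix T1 T2 assume "T1 \<in> ?B" "T2 \<in> ?B" "insert k T1 = insert k T2"
    moreover then have "k \<notin> T1" "k \<notin> T2" using k by auto
    ultimately show "T1 = T2" by (metis Diff_insert_absorb)
  qed
  have "esym (insert k I) (Suc a) x = (\<Sum>S\<in>?A. \<Prod>i\<in>S. x i) + (\<Sum>S\<in>insert k ` ?B. \<Prod>i\<in>S. x i)"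
    unfolding esym_def eq using finA finB disj by (simp add: sum.union_disjoint)
  also have "(\<Sum>S\<in>insert k ` ?B. \<Prod>i\<in>S. x i) = (\<Sum>T\<in>?B. \<Prod>i\<in>insert k T. x i)"
    using inj by (simp add: sum.reindex)
  also have "\<dots> = (\<Sum>T\<in>?B. x k * (\<Prod>i\<in>T. x i))"
  proof (rule sum.cong[OF refl])
    fix T assume "T \<in> ?B"
    then have "finite T" "k \<notin> T" using f k finite_subset by auto
    then show "(\<Prod>i\<in>insert k T. x i) = x k * (\<Prod>i\<in>T. x i)" by simp
  qed
  finally show ?thesis by (simp add: esym_def sum_distrib_left)
qed

lemma esym_remove:
  assumes f: "finite I" and k: "k \<in> I"
  shows "esym I (Suc a) x = esym (I - {k}) (Suc a) x + x k * esym (I - {k}) a x"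
proof -
  have "I = insert k (I - {k})" using k by auto
  then show ?thesis using esym_insert[of "I - {k}" k a x] f by simp
qed

lemma esym_sum_remove:
  assumes f: "finite I"
  shows "(\<Sum>k\<in>I. esym (I - {k}) a x) = (of_nat (card I) - of_nat a) * esym I a x"
proof (cases "a \<le> card I")
  case False
  then have "\<forall>k\<in>I. esym (I - {k}) a x = 0" using f
    by (intro ballI esym_big) (auto simp: card_Diff_singleton)
  then show ?thesis using False f esym_big[of I a x] by simp
next
  case True
  let ?B = "{S. S \<subseteq> I \<and> card S = a}"
  have "(\<Sum>k\<in>I. esym (I - {k}) a x) = (\<Sum>k\<in>I. \<Sum>S\<in>{S \<in> ?B. k \<notin> S}. \<Prod>i\<in>S. x i)"
    unfolding esym_def by (intro sum.cong refl) auto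
  also have "\<dots> = (\<Sum>S\<in>?B. \<Sum>k\<in>{k\<in>I. k \<notin> S}. \<Prod>i\<in>S. x i)"
    using f by (intro sum.swap_restrict) auto
  also have "\<dots> = (\<Sum>S\<in>?B. (of_nat (card I) - of_nat a) * (\<Prod>i\<in>S. x i))"
  proof (rule sum.cong[OF refl])
    fix S assume S: "S \<in> ?B"
    have "{k\<in>I. k \<notin> S} = I - S" by auto
    moreover have "card (I - S) = card I - a" using S f by (metis (mono_tags) card_Diff_subset finite_subset mem_Collect_eq)
    ultimately show "(\<Sum>k\<in>{k\<in>I. k \<notin> S}. \<Prod>i\<in>S. x i) = (of_nat (card I) - of_nat a) * (\<Prod>i\<in>S. x i)"
      using True by (simp add: of_nat_diff)
  qed
  finally show ?thesis by (simp add: esym_def sum_distrib_left)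
qed




context
  fixes I :: "nat set" and x :: "nat \<Rightarrow> complex"
  assumes fin: "finite I"
begin

definition RR :: "nat \<Rightarrow> nat \<Rightarrow> complex" where
  "RR a b = (\<Sum>k\<in>I. esym (I - {k}) a x * esym (I - {k}) b x)"

lemma RR_0: "RR c 0 = (of_nat (card I) - of_nat c) * esym I c x"
  unfolding RR_def using fin by (simp add: esym_0 esym_sum_remove)

lemma RR_Suc: "RR a (Suc b) = (of_nat (card I) - of_nat a) * esym I a x * esym I (Suc b) x
   - (of_nat (card I) - of_nat b) * esym I (Suc a) x * esym I b x + RR (Suc a) b"
proof -
  have "RR a (Suc b) = (\<Sum>k\<in>I. esym (I - {k}) a x * (esym I (Suc b) x - x k * esym (I - {k}) b x))"
    unfolding RR_def using fin by (intro sum.cong refl) (simp add: esym_remove[of I])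
  also have "\<dots> = (\<Sum>k\<in>I. esym I (Suc b) x * esym (I - {k}) a x
       - esym I (Suc a) x * esym (I - {k}) b x + esym (I - {k}) (Suc a) x * esym (I - {k}) b x)"
    using fin by (intro sum.cong refl) (simp add: esym_remove[of I] algebra_simps)
  also have "\<dots> = esym I (Suc b) x * (\<Sum>k\<in>I. esym (I - {k}) a x)
     - esym I (Suc a) x * (\<Sum>k\<in>I. esym (I - {k}) b x) + RR (Suc a) b"
    unfolding RR_def by (simp add: sum.distrib sum_subtractf sum_distrib_left)
  finally show ?thesis using fin by (simp add: esym_sum_remove algebra_simps)
qed

lemma RR_closed: "RR a (Suc b) = (of_nat (card I) - of_nat a) * esym I a x * esym I (Suc b) x
   + (\<Sum>d\<in>{1..b}. (of_nat b + 1 - of_nat a - 2 * of_nat d) * esym I (a + d) x * esym I (Suc b - d) x)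
   - (of_nat a + of_nat b + 1) * esym I (a + b + 1) x"
proof (induction b arbitrary: a)
  case 0
  show ?case using fin by (simp add: RR_Suc RR_0 esym_0 algebra_simps)
next
  case (Suc b)
  have s: "(\<Sum>d\<in>{1..Suc b}. (of_nat (Suc b) + 1 - of_nat a - 2 * of_nat d) * esym I (a + d) x * esym I (Suc (Suc b) - d) x)
     = (of_nat b - of_nat a) * esym I (Suc a) x * esym I (Suc b) x
     + (\<Sum>d\<in>{1..b}. (of_nat b + 1 - of_nat (Suc a) - 2 * of_nat d) * esym I (Suc a + d) x * esym I (Suc b - d) x)"
  proof -
    have "(\<Sum>d\<in>{1..Suc b}. (of_nat (Suc b) + 1 - of_nat a - 2 * of_nat d) * esym I (a + d) x * esym I (Suc (Suc b) - d) x)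
      = (of_nat (Suc b) + 1 - of_nat a - 2) * esym I (a + 1) x * esym I (Suc b) x
       + (\<Sum>d\<in>{1..b}. (of_nat (Suc b) + 1 - of_nat a - 2 * of_nat (Suc d)) * esym I (a + Suc d) x * esym I (Suc (Suc b) - Suc d) x)"
      by (simp only: sum.atLeast_Suc_atMost[of 1 "Suc b"] sum.shift_bounds_cl_Suc_ivl, simp)
    also have "\<dots> = (of_nat b - of_nat a) * esym I (Suc a) x * esym I (Suc b) x
     + (\<Sum>d\<in>{1..b}. (of_nat b + 1 - of_nat (Suc a) - 2 * of_nat d) * esym I (Suc a + d) x * esym I (Suc b - d) x)"
      by (intro arg_cong2[where f="(+)"] sum.cong refl) (auto simp: algebra_simps)
    finally show ?thesis .
  qed
  show ?case
    unfolding RR_Suc[of a "Suc b"] Suc.IH[of "Suc a"] s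
    by (simp add: algebra_simps)
qed

definition QQ :: "nat \<Rightarrow> nat \<Rightarrow> complex" where
  "QQ a b = (\<Sum>k\<in>I. \<Sum>l\<in>I. if k = l then 0 else esym (I - {k}) a x * esym (I - {l}) b x)"

lemma QQ_RR: "QQ a b = (of_nat (card I) - of_nat a) * (of_nat (card I) - of_nat b) * esym I a x * esym I b x - RR a b"
proof -
  have "QQ a b = (\<Sum>k\<in>I. esym (I - {k}) a x * (\<Sum>l\<in>I. esym (I - {l}) b x) - esym (I - {k}) a x * esym (I - {k}) b x)"
  proof (unfold QQ_def, rule sum.cong[OF refl])
    fix k assume k: "k \<in> I"
    have "(\<Sum>l\<in>I. if k = l then 0 else esym (I - {k}) a x * esym (I - {l}) b x)
       = (\<Sum>l\<in>I. esym (I - {k}) a x * esym (I - {l}) b x - (if k = l then esym (I - {k}) a x * esym (I - {l}) b x else 0))"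
      by (intro sum.cong refl) auto
    also have "\<dots> = (\<Sum>l\<in>I. esym (I - {k}) a x * esym (I - {l}) b x) - esym (I - {k}) a x * esym (I - {k}) b x"
      using k fin by (simp add: sum_subtractf)
    finally show "(\<Sum>l\<in>I. if k = l then 0 else esym (I - {k}) a x * esym (I - {l}) b x) =
         esym (I - {k}) a x * (\<Sum>l\<in>I. esym (I - {l}) b x) - esym (I - {k}) a x * esym (I - {k}) b x"
      by (simp add: sum_distrib_left)
  qed
  also have "\<dots> = (\<Sum>k\<in>I. esym (I - {k}) a x) * (\<Sum>l\<in>I. esym (I - {l}) b x) - RR a b"
    unfolding RR_def by (simp add: sum_subtractf sum_distrib_right)
  finally show ?thesis using fin by (simp add: esym_sum_remove algebra_simps)
qed

lemma QQ_0: "QQ a 0 = (of_nat (card I) - of_nat a) * (of_nat (card I) - 1) * esym I a x"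
  unfolding QQ_RR RR_0 using fin by (simp add: esym_0 algebra_simps)

lemma QQ_Suc: "QQ a (Suc b) = (of_nat (card I) - of_nat a) * (of_nat (card I) - of_nat b - 2) * esym I a x * esym I (Suc b) x
   - (\<Sum>d\<in>{1..b}. (of_nat b + 1 - of_nat a - 2 * of_nat d) * esym I (a + d) x * esym I (Suc b - d) x)
   + (of_nat a + of_nat b + 1) * esym I (a + b + 1) x"
  unfolding QQ_RR RR_closed by (simp add: algebra_simps)

end



lemma pderiv_u:
  assumes k: "k \<in> {1..n}"
  shows "pderiv_c k (u_inv n (Suc a)) p = 2 * p k * esym ({1..n} - {k}) a (\<lambda>i. (p i)^2)"
proof -
  let ?J = "{1..n} - {k}"
  let ?A = "esym ?J (Suc a) (\<lambda>i. (p i)^2)"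
  let ?B = "esym ?J a (\<lambda>i. (p i)^2)"
  have eq: "u_inv n (Suc a) (p(k := t)) = ?A + t^2 * ?B" for t
  proof -
    have "u_inv n (Suc a) (p(k := t)) = esym ?J (Suc a) (\<lambda>i. ((p(k := t)) i)^2) + t^2 * esym ?J a (\<lambda>i. ((p(k := t)) i)^2)"
      unfolding u_inv_esym using k by (subst esym_remove[of _ k]) auto
    also have "esym ?J (Suc a) (\<lambda>i. ((p(k := t)) i)^2) = ?A" by (rule esym_cong) auto
    also have "esym ?J a (\<lambda>i. ((p(k := t)) i)^2) = ?B" by (rule esym_cong) auto
    finally show ?thesis .
  qed
  have "((\<lambda>t. ?A + t^2 * ?B) has_field_derivative (2 * p k * ?B)) (at (p k))"
    by (auto intro!: derivative_eq_intros)
  then have "deriv (\<lambda>t. ?A + t^2 * ?B) (p k) = 2 * p k * ?B" by (rule DERIV_imp_deriv)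
  then show ?thesis unfolding pderiv_c_def eq .
qed

lemma cometric_QQ:
  assumes nz: "\<forall>k\<in>{1..n}. p k \<noteq> 0"
  shows "cometric n (Suc a) (Suc b) p = 4 * QQ {1..n} (\<lambda>i. (p i)^2) a b"
proof -
  have "cometric n (Suc a) (Suc b) p = (\<Sum>k\<in>{1..n}. \<Sum>l\<in>{1..n}. 4 * (if k = l then 0 else
      esym ({1..n} - {k}) a (\<lambda>i. (p i)^2) * esym ({1..n} - {l}) b (\<lambda>i. (p i)^2)))"
    unfolding cometric_def
  proof (intro sum.cong refl)
    fix k l assume k: "k \<in> {1..n}" and l: "l \<in> {1..n}"
    have "p k \<noteq> 0" "p l \<noteq> 0" using nz k l by auto
    then show "metric_g k l p * pderiv_c k (u_inv n (Suc a)) p * pderiv_c l (u_inv n (Suc b)) p =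
      4 * (if k = l then 0 else esym ({1..n} - {k}) a (\<lambda>i. (p i)^2) * esym ({1..n} - {l}) b (\<lambda>i. (p i)^2))"
      using k l by (simp add: pderiv_u metric_g_def field_simps)
  qed
  then show ?thesis unfolding QQ_def[OF finite_atLeastAtMost] by (simp add: sum_distrib_left)
qed




definition monval :: "(nat \<Rightarrow>\<^sub>0 nat) \<Rightarrow> (nat \<Rightarrow> complex) \<Rightarrow> complex" where
  "monval m y = (\<Prod>v\<in>Poly_Mapping.keys m. y v ^ Poly_Mapping.lookup m v)"

definition wt :: "(nat \<Rightarrow>\<^sub>0 nat) \<Rightarrow> nat" where
  "wt m = (\<Sum>v\<in>Poly_Mapping.keys m. 2 * v * Poly_Mapping.lookup m v)"

lemma mpoly_eval_superset:
  assumes "finite K" "Poly_Mapping.keys P \<subseteq> K"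
  shows "mpoly_eval P y = (\<Sum>m\<in>K. Poly_Mapping.lookup P m * monval m y)"
  unfolding mpoly_eval_def monval_def
  by (rule sum.mono_neutral_left) (use assms in \<open>auto simp: in_keys_iff\<close>)

lemma mpoly_eval_add: "mpoly_eval (P + Q) y = mpoly_eval P y + mpoly_eval Q y"
proof -
  let ?K = "Poly_Mapping.keys P \<union> Poly_Mapping.keys Q"
  have "mpoly_eval (P + Q) y = (\<Sum>m\<in>?K. Poly_Mapping.lookup (P + Q) m * monval m y)"
    by (rule mpoly_eval_superset) (simp_all add: keys_add)
  also have "\<dots> = (\<Sum>m\<in>?K. Poly_Mapping.lookup P m * monval m y) + (\<Sum>m\<in>?K. Poly_Mapping.lookup Q m * monval m y)"
    by (simp add: lookup_add sum.distrib algebra_simps)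
  also have "\<dots> = mpoly_eval P y + mpoly_eval Q y"
    using mpoly_eval_superset[of ?K P y] mpoly_eval_superset[of ?K Q y] by simp
  finally show ?thesis .
qed

lemma mpoly_eval_zero: "mpoly_eval 0 y = 0"
  by (simp add: mpoly_eval_def)

lemma mpoly_eval_sum: "mpoly_eval (\<Sum>i\<in>A. f i) y = (\<Sum>i\<in>A. mpoly_eval (f i) y)"
  by (induction A rule: infinite_finite_induct) (auto simp: mpoly_eval_zero mpoly_eval_add)

lemma mpoly_eval_single: "mpoly_eval (Poly_Mapping.single m c) y = c * monval m y"
  by (simp add: mpoly_eval_def monval_def)

lemma monval_superset:
  assumes "finite V" "Poly_Mapping.keys m \<subseteq> V"
  shows "monval m y = (\<Prod>v\<in>V. y v ^ Poly_Mapping.lookup m v)"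
  unfolding monval_def
  by (rule prod.mono_neutral_left) (use assms in \<open>auto simp: in_keys_iff\<close>)

lemma wt_superset:
  assumes "finite V" "Poly_Mapping.keys m \<subseteq> V"
  shows "wt m = (\<Sum>v\<in>V. 2 * v * Poly_Mapping.lookup m v)"
  unfolding wt_def
  by (rule sum.mono_neutral_left) (use assms in \<open>auto simp: in_keys_iff\<close>)

lemma monval_add: "monval (m1 + m2) y = monval m1 y * monval m2 y"
proof -
  let ?V = "Poly_Mapping.keys m1 \<union> Poly_Mapping.keys m2"
  have "monval (m1 + m2) y = (\<Prod>v\<in>?V. y v ^ Poly_Mapping.lookup (m1 + m2) v)"
    by (rule monval_superset) (simp_all add: keys_add)
  also have "\<dots> = (\<Prod>v\<in>?V. y v ^ Poly_Mapping.lookup m1 v) * (\<Prod>v\<in>?V. y v ^ Poly_Mapping.lookup m2 v)"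
    by (simp add: lookup_add power_add prod.distrib)
  also have "\<dots> = monval m1 y * monval m2 y"
    using monval_superset[of ?V m1 y] monval_superset[of ?V m2 y] by simp
  finally show ?thesis .
qed

lemma wt_add: "wt (m1 + m2) = wt m1 + wt m2"
proof -
  let ?V = "Poly_Mapping.keys m1 \<union> Poly_Mapping.keys m2"
  have "wt (m1 + m2) = (\<Sum>v\<in>?V. 2 * v * Poly_Mapping.lookup (m1 + m2) v)"
    by (rule wt_superset) (simp_all add: keys_add)
  also have "\<dots> = (\<Sum>v\<in>?V. 2 * v * Poly_Mapping.lookup m1 v) + (\<Sum>v\<in>?V. 2 * v * Poly_Mapping.lookup m2 v)"
    by (simp add: lookup_add sum.distrib algebra_simps)
  also have "\<dots> = wt m1 + wt m2"
    using wt_superset[of ?V m1] wt_superset[of ?V m2] by simp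
  finally show ?thesis .
qed

definition vr :: "nat \<Rightarrow> (nat \<Rightarrow>\<^sub>0 nat)" where
  "vr c = (if c = 0 then 0 else Poly_Mapping.single c 1)"

lemma keys_vr: "Poly_Mapping.keys (vr c) = (if c = 0 then {} else {c})"
  by (simp add: vr_def)

lemma lookup_vr: "Poly_Mapping.lookup (vr c) v = (if c \<noteq> 0 \<and> v = c then 1 else 0)"
  by (auto simp: vr_def lookup_single)

lemma monval_vr: "monval (vr c) y = (if c = 0 then 1 else y c)"
  by (simp add: monval_def vr_def)

lemma wt_vr: "wt (vr c) = 2 * c"
  by (simp add: wt_def vr_def)

definition mterm :: "nat \<Rightarrow> nat \<Rightarrow> nat \<Rightarrow> complex \<Rightarrow> (nat \<Rightarrow>\<^sub>0 nat) \<Rightarrow>\<^sub>0 complex" where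
  "mterm n c d coef = (if c \<le> n \<and> d \<le> n then Poly_Mapping.single (vr c + vr d) coef else 0)"

definition good :: "nat \<Rightarrow> nat \<Rightarrow> (nat \<Rightarrow>\<^sub>0 nat) \<Rightarrow> bool" where
  "good n w m \<longleftrightarrow> Poly_Mapping.keys m \<subseteq> {1..n} \<and> wt m = w \<and> Poly_Mapping.lookup m (n - 1) \<le> 1"

lemma mterm_good:
  assumes "2 * c + 2 * d = w" and "c = n - 1 \<and> d = n - 1 \<Longrightarrow> coef = 0"
  shows "\<forall>m\<in>Poly_Mapping.keys (mterm n c d coef). good n w m"
proof
  fix m assume m: "m \<in> Poly_Mapping.keys (mterm n c d coef)"
  then have cd: "c \<le> n" "d \<le> n" "coef \<noteq> 0" and mm: "m = vr c + vr d"
    by (auto simp: mterm_def split: if_splits)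
  have "Poly_Mapping.keys m \<subseteq> {1..n}"
    using keys_add[of "vr c" "vr d"] cd unfolding mm keys_vr by (auto split: if_splits)
  moreover have "wt m = w" using assms(1) by (simp add: mm wt_add wt_vr)
  moreover have "Poly_Mapping.lookup m (n - 1) \<le> 1"
    using assms(2) cd by (auto simp: mm lookup_add lookup_vr)
  ultimately show "good n w m" by (simp add: good_def)
qed

lemma good_add:
  "\<forall>m\<in>Poly_Mapping.keys P. good n w m \<Longrightarrow> \<forall>m\<in>Poly_Mapping.keys Q. good n w m \<Longrightarrow>
   \<forall>m\<in>Poly_Mapping.keys (P + Q). good n w m"
  using keys_add[of P Q] by blast

lemma good_sum:
  "(\<And>i. i \<in> A \<Longrightarrow> \<forall>m\<in>Poly_Mapping.keys (f i). good n w m) \<Longrightarrow>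
   \<forall>m\<in>Poly_Mapping.keys (\<Sum>i\<in>A. f i). good n w m"
  using keys_sum[of f A] by blast

lemma u_inv_0: "u_inv n 0 p = 1"
  by (simp add: u_inv_esym esym_0)

lemma u_inv_big: "n < c \<Longrightarrow> u_inv n c p = 0"
  by (simp add: u_inv_esym esym_big)

lemma mterm_eval: "mpoly_eval (mterm n c d coef) (\<lambda>k. u_inv n k p) = coef * u_inv n c p * u_inv n d p"
  by (auto simp: mterm_def mpoly_eval_zero mpoly_eval_single monval_add monval_vr u_inv_0 u_inv_big)




lemma rep:
  assumes n: "n \<ge> 2" and i: "i \<in> {1..n}" and j: "j \<in> {1..n}"
  shows "\<exists>G :: (nat \<Rightarrow>\<^sub>0 nat) \<Rightarrow>\<^sub>0 complex. (\<forall>m\<in>Poly_Mapping.keys G. good n (2*i + 2*j - 4) m)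
     \<and> (\<forall>p. (\<forall>k\<in>{1..n}. p k \<noteq> 0) \<longrightarrow> cometric n i j p = mpoly_eval G (\<lambda>k. u_inv n k p))"
proof -
  obtain a where a: "i = Suc a" using i by (cases i) auto
  have an: "a \<le> n - 1" using i a by auto
  have cI: "card {1..n} = n" by simp
  consider (one) "j = Suc 0" | (two) b where "j = Suc (Suc b)" using j by (cases j; cases "j - 1") auto
  then show ?thesis
  proof cases
    case one
    let ?G = "mterm n a 0 (4 * ((of_nat n - of_nat a) * (of_nat n - 1)))"
    show ?thesis
    proof (intro exI conjI allI impI)
      show "\<forall>m\<in>Poly_Mapping.keys ?G. good n (2*i + 2*j - 4) m"
        by (rule mterm_good) (use a one n in auto)
      fix p :: "nat \<Rightarrow> complex" assume nz: "\<forall>k\<in>{1..n}. p k \<noteq> 0"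
      show "cometric n i j p = mpoly_eval ?G (\<lambda>k. u_inv n k p)"
        unfolding a one cometric_QQ[OF nz] QQ_0[OF finite_atLeastAtMost] mterm_eval
        by (simp add: u_inv_0 u_inv_esym esym_0)
    qed
  next
    case two
    have bn: "b + 2 \<le> n" using j two by auto
    let ?G = "mterm n a (Suc b) (4 * ((of_nat n - of_nat a) * (of_nat n - of_nat b - 2)))
      + (\<Sum>d\<in>{1..b}. mterm n (a + d) (Suc b - d) (- (4 * (of_nat b + 1 - of_nat a - 2 * of_nat d))))
      + mterm n (a + b + 1) 0 (4 * (of_nat a + of_nat b + 1))"
    show ?thesis
    proof (intro exI conjI allI impI)
      have w: "2*i + 2*j - 4 = 2 * a + 2 * b + 2" using a two by simp
      have g1: "\<forall>m\<in>Poly_Mapping.keys (mterm n a (Suc b) (4 * ((of_nat n - of_nat a) * (of_nat n - of_nat b - 2)))).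
          good n (2*i + 2*j - 4) m"
      proof (rule mterm_good)
        show "2 * a + 2 * Suc b = 2*i + 2*j - 4" using w by simp
        assume "a = n - 1 \<and> Suc b = n - 1"
        then have "b = n - 2" by linarith
        then have "of_nat b = (of_nat n - 2 :: complex)" using n by (simp add: of_nat_diff)
        then show "4 * ((of_nat n - of_nat a) * (of_nat n - of_nat b - 2)) = (0::complex)" by simp
      qed
      have g2: "\<forall>m\<in>Poly_Mapping.keys (\<Sum>d\<in>{1..b}. mterm n (a + d) (Suc b - d) (- (4 * (of_nat b + 1 - of_nat a - 2 * of_nat d)))).
          good n (2*i + 2*j - 4) m"
      proof (rule good_sum, rule mterm_good)
        fix d assume "d \<in> {1..b}"
        then show "2 * (a + d) + 2 * (Suc b - d) = 2*i + 2*j - 4" using w by auto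
        assume "a + d = n - 1 \<and> Suc b - d = n - 1"
        then have False using \<open>d \<in> {1..b}\<close> bn an by auto
        then show "- (4 * (of_nat b + 1 - of_nat a - 2 * of_nat d)) = (0::complex)" ..
      qed
      have g3: "\<forall>m\<in>Poly_Mapping.keys (mterm n (a + b + 1) 0 (4 * (of_nat a + of_nat b + 1))).
          good n (2*i + 2*j - 4) m"
        by (rule mterm_good) (use w n in auto)
      show "\<forall>m\<in>Poly_Mapping.keys ?G. good n (2*i + 2*j - 4) m"
        by (intro good_add g1 g2 g3)
    next
      fix p :: "nat \<Rightarrow> complex" assume nz: "\<forall>k\<in>{1..n}. p k \<noteq> 0"
      let ?e = "\<lambda>c. esym {1..n} c (\<lambda>i. (p i)^2)"
      have s: "(\<Sum>d\<in>{1..b}. - (4 * (of_nat b + 1 - of_nat a - 2 * of_nat d)) * ?e (a + d) * ?e (Suc b - d))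
         = - (4 * (\<Sum>d\<in>{1..b}. (of_nat b + 1 - of_nat a - 2 * of_nat d) * ?e (a + d) * ?e (Suc b - d)))"
        unfolding sum_distrib_left sum_negf[symmetric] by (rule sum.cong) (auto simp: algebra_simps)
      show "cometric n i j p = mpoly_eval ?G (\<lambda>k. u_inv n k p)"
        unfolding a two cometric_QQ[OF nz] QQ_Suc[OF finite_atLeastAtMost] mpoly_eval_add mpoly_eval_sum mterm_eval
        unfolding u_inv_0 u_inv_esym s
        by (simp add: esym_0 algebra_simps)
    qed
  qed
qed




lemma esym_perm:
  assumes s: "\<sigma> permutes I" and f: "finite I"
  shows "esym I k (\<lambda>i. g (\<sigma> i)) = esym I k g"
proof -
  let ?A = "{S. S \<subseteq> I \<and> card S = k}"
  have inj: "inj \<sigma>" using s by (rule permutes_inj)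
  have injv: "inj (inv \<sigma>)" using permutes_inv[OF s] by (rule permutes_inj)
  have im: "\<sigma> ` S \<subseteq> I" if "S \<subseteq> I" for S by (metis image_mono permutes_image[OF s] that)
  have imv: "inv \<sigma> ` S \<subseteq> I" if "S \<subseteq> I" for S by (metis image_mono permutes_image[OF permutes_inv[OF s]] that)
  show ?thesis unfolding esym_def
  proof (rule sum.reindex_bij_witness[where j = "\<lambda>S. \<sigma> ` S" and i = "\<lambda>S. inv \<sigma> ` S"])
    fix S assume "S \<in> ?A"
    show "inv \<sigma> ` \<sigma> ` S = S" using inj by (simp add: image_image)
    show "\<sigma> ` S \<in> ?A" using \<open>S \<in> ?A\<close> im inj by (auto simp: card_image inj_on_subset)
    show "(\<Prod>i\<in>\<sigma> ` S. g i) = (\<Prod>i\<in>S. g (\<sigma> i))"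
      using inj by (simp add: prod.reindex inj_on_subset)
  next
    fix S assume "S \<in> ?A"
    show "\<sigma> ` inv \<sigma> ` S = S" using s by (simp add: image_image permutes_inverses(1))
    show "inv \<sigma> ` S \<in> ?A" using \<open>S \<in> ?A\<close> imv injv by (auto simp: card_image inj_on_subset)
  qed
qed

lemma u_inv_signed_perm:
  assumes s: "\<sigma> permutes {1..n}" and e: "\<forall>k\<in>{1..n}. \<epsilon> k = 1 \<or> \<epsilon> k = -1"
  shows "u_inv n k (\<lambda>i. \<epsilon> i * p (\<sigma> i)) = u_inv n k p"
proof -
  have "u_inv n k (\<lambda>i. \<epsilon> i * p (\<sigma> i)) = esym {1..n} k (\<lambda>i. (p (\<sigma> i))^2)"
    unfolding u_inv_esym
  proof (rule esym_cong)
    fix i assume "i \<in> {1..n}"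
    then have "\<epsilon> i = 1 \<or> \<epsilon> i = -1" using e by blast
    then have "(\<epsilon> i)^2 = 1" by auto
    then show "(\<epsilon> i * p (\<sigma> i))^2 = (p (\<sigma> i))^2" by (simp add: power_mult_distrib)
  qed
  also have "\<dots> = u_inv n k p"
    unfolding u_inv_esym by (rule esym_perm[OF s finite_atLeastAtMost])
  finally show ?thesis .
qed

lemma u_inv_scale: "u_inv n k (\<lambda>i. t * p i) = t ^ (2 * k) * u_inv n k p"
  unfolding u_inv_def sum_distrib_left
proof (rule sum.cong[OF refl])
  fix S assume "S \<in> {S. S \<subseteq> {1..n} \<and> card S = k}"
  then show "(\<Prod>i\<in>S. (t * p i)^2) = t ^ (2 * k) * (\<Prod>i\<in>S. (p i)^2)"
    by (simp add: power_mult_distrib prod.distrib power_mult)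
qed

lemma mpoly_hom:
  assumes "\<forall>m\<in>Poly_Mapping.keys G. wt m = w"
  shows "mpoly_eval G (\<lambda>k. t ^ (2 * k) * y k) = t ^ w * mpoly_eval G y"
  unfolding mpoly_eval_def sum_distrib_left
proof (rule sum.cong[OF refl])
  fix m assume m: "m \<in> Poly_Mapping.keys G"
  have "(\<Prod>v\<in>Poly_Mapping.keys m. (t ^ (2 * v) * y v) ^ Poly_Mapping.lookup m v)
     = (\<Prod>v\<in>Poly_Mapping.keys m. t ^ (2 * v * Poly_Mapping.lookup m v)) * (\<Prod>v\<in>Poly_Mapping.keys m. y v ^ Poly_Mapping.lookup m v)"
    by (simp add: power_mult_distrib prod.distrib power_mult)
  also have "(\<Prod>v\<in>Poly_Mapping.keys m. t ^ (2 * v * Poly_Mapping.lookup m v)) = t ^ wt m"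
    unfolding wt_def by (simp add: power_sum)
  finally show "Poly_Mapping.lookup G m * (\<Prod>v\<in>Poly_Mapping.keys m. (t ^ (2 * v) * y v) ^ Poly_Mapping.lookup m v)
     = t ^ w * (Poly_Mapping.lookup G m * (\<Prod>v\<in>Poly_Mapping.keys m. y v ^ Poly_Mapping.lookup m v))"
    using assms m by simp
qed




theorem mainTheorem5:
  fixes n :: nat
  assumes "n \<ge> 2"
  shows "(\<forall>i\<in>{1..n}. \<forall>j\<in>{1..n}. \<exists>G :: (nat \<Rightarrow>\<^sub>0 nat) \<Rightarrow>\<^sub>0 complex.
            (\<forall>m\<in>Poly_Mapping.keys G.
                Poly_Mapping.keys m \<subseteq> {1..n}
              \<and> (\<Sum>v\<in>Poly_Mapping.keys m. 2 * v * Poly_Mapping.lookup m v) = 2*i + 2*j - 4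
              \<and> Poly_Mapping.lookup m (n - 1) \<le> 1)
          \<and> (\<forall>p. (\<forall>k\<in>{1..n}. p k \<noteq> 0) \<longrightarrow>
                 cometric n i j p = mpoly_eval G (\<lambda>k. u_inv n k p)))
       \<and> (\<forall>i\<in>{1..n}. \<forall>j\<in>{1..n}. \<forall>p \<sigma> (\<epsilon> :: nat \<Rightarrow> complex).
            \<sigma> permutes {1..n} \<and> (\<forall>k\<in>{1..n}. \<epsilon> k = 1 \<or> \<epsilon> k = -1)
            \<and> (\<forall>k\<in>{1..n}. p k \<noteq> 0) \<longrightarrow>
              cometric n i j (\<lambda>k. \<epsilon> k * p (\<sigma> k)) = cometric n i j p)
       \<and> (\<forall>i\<in>{1..n}. \<forall>j\<in>{1..n}. \<forall>p (t :: complex).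
            t \<noteq> 0 \<and> (\<forall>k\<in>{1..n}. p k \<noteq> 0) \<longrightarrow>
              cometric n i j (\<lambda>k. t * p k) = t ^ (2*i + 2*j - 4) * cometric n i j p)
       \<and> (\<forall>p. (\<forall>k\<in>{1..n}. p k \<noteq> 0) \<longrightarrow>
              cometric n 1 1 p = 4 * (of_nat n ^ 2 - of_nat n))"
proof (intro conjI)
  show "\<forall>i\<in>{1..n}. \<forall>j\<in>{1..n}. \<exists>G :: (nat \<Rightarrow>\<^sub>0 nat) \<Rightarrow>\<^sub>0 complex.
            (\<forall>m\<in>Poly_Mapping.keys G.
                Poly_Mapping.keys m \<subseteq> {1..n}
              \<and> (\<Sum>v\<in>Poly_Mapping.keys m. 2 * v * Poly_Mapping.lookup m v) = 2*i + 2*j - 4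
              \<and> Poly_Mapping.lookup m (n - 1) \<le> 1)
          \<and> (\<forall>p. (\<forall>k\<in>{1..n}. p k \<noteq> 0) \<longrightarrow>
                 cometric n i j p = mpoly_eval G (\<lambda>k. u_inv n k p))"
  proof (intro ballI)
    fix i j assume ij: "i \<in> {1..n}" "j \<in> {1..n}"
    obtain G where Gk: "\<forall>m\<in>Poly_Mapping.keys G. good n (2*i + 2*j - 4) m"
      and G: "\<forall>p. (\<forall>k\<in>{1..n}. p k \<noteq> 0) \<longrightarrow> cometric n i j p = mpoly_eval G (\<lambda>k. u_inv n k p)"
      using rep[OF assms ij] by blast
    show "\<exists>G :: (nat \<Rightarrow>\<^sub>0 nat) \<Rightarrow>\<^sub>0 complex.
            (\<forall>m\<in>Poly_Mapping.keys G.
                Poly_Mapping.keys m \<subseteq> {1..n}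
              \<and> (\<Sum>v\<in>Poly_Mapping.keys m. 2 * v * Poly_Mapping.lookup m v) = 2*i + 2*j - 4
              \<and> Poly_Mapping.lookup m (n - 1) \<le> 1)
          \<and> (\<forall>p. (\<forall>k\<in>{1..n}. p k \<noteq> 0) \<longrightarrow>
                 cometric n i j p = mpoly_eval G (\<lambda>k. u_inv n k p))"
      by (rule exI[of _ G], rule conjI) (use Gk G in \<open>simp_all add: good_def wt_def\<close>)
  qed
  show "\<forall>i\<in>{1..n}. \<forall>j\<in>{1..n}. \<forall>p \<sigma> (\<epsilon> :: nat \<Rightarrow> complex).
            \<sigma> permutes {1..n} \<and> (\<forall>k\<in>{1..n}. \<epsilon> k = 1 \<or> \<epsilon> k = -1)
            \<and> (\<forall>k\<in>{1..n}. p k \<noteq> 0) \<longrightarrow>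
              cometric n i j (\<lambda>k. \<epsilon> k * p (\<sigma> k)) = cometric n i j p"
  proof (intro ballI allI impI)
    fix i j :: nat and p :: "nat \<Rightarrow> complex" and \<sigma> and \<epsilon> :: "nat \<Rightarrow> complex"
    assume ij: "i \<in> {1..n}" "j \<in> {1..n}"
      and h: "\<sigma> permutes {1..n} \<and> (\<forall>k\<in>{1..n}. \<epsilon> k = 1 \<or> \<epsilon> k = -1) \<and> (\<forall>k\<in>{1..n}. p k \<noteq> 0)"
    obtain G where G: "\<forall>p. (\<forall>k\<in>{1..n}. p k \<noteq> 0) \<longrightarrow> cometric n i j p = mpoly_eval G (\<lambda>k. u_inv n k p)"
      using rep[OF assms ij] by blast
    have nz: "\<forall>k\<in>{1..n}. \<epsilon> k * p (\<sigma> k) \<noteq> 0"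
    proof
      fix k assume k: "k \<in> {1..n}"
      then have "\<sigma> k \<in> {1..n}" using permutes_in_image[of \<sigma> "{1..n}" k] h k by simp
      then have "p (\<sigma> k) \<noteq> 0" using h by simp
      moreover have "\<epsilon> k = 1 \<or> \<epsilon> k = -1" using h k by simp
      then have "\<epsilon> k \<noteq> 0" by auto
      ultimately show "\<epsilon> k * p (\<sigma> k) \<noteq> 0" by simp
    qed
    have "cometric n i j (\<lambda>k. \<epsilon> k * p (\<sigma> k)) = mpoly_eval G (\<lambda>k. u_inv n k (\<lambda>i. \<epsilon> i * p (\<sigma> i)))"
      by (rule G[THEN spec, THEN mp, OF nz])
    also have "(\<lambda>k. u_inv n k (\<lambda>i. \<epsilon> i * p (\<sigma> i))) = (\<lambda>k. u_inv n k p)"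
    proof (rule ext)
      fix k
      have h1: "\<sigma> permutes {1..n}" and h2: "\<forall>k\<in>{1..n}. \<epsilon> k = 1 \<or> \<epsilon> k = -1" using h by auto
      show "u_inv n k (\<lambda>i. \<epsilon> i * p (\<sigma> i)) = u_inv n k p" by (rule u_inv_signed_perm[OF h1 h2])
    qed
    also have "mpoly_eval G (\<lambda>k. u_inv n k p) = cometric n i j p" using G[rule_format, of p] h by simp
    finally show "cometric n i j (\<lambda>k. \<epsilon> k * p (\<sigma> k)) = cometric n i j p" .
  qed
  show "\<forall>i\<in>{1..n}. \<forall>j\<in>{1..n}. \<forall>p (t :: complex).
            t \<noteq> 0 \<and> (\<forall>k\<in>{1..n}. p k \<noteq> 0) \<longrightarrow>
              cometric n i j (\<lambda>k. t * p k) = t ^ (2*i + 2*j - 4) * cometric n i j p"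
  proof (intro ballI allI impI)
    fix i j :: nat and p :: "nat \<Rightarrow> complex" and t :: complex
    assume ij: "i \<in> {1..n}" "j \<in> {1..n}" and h: "t \<noteq> 0 \<and> (\<forall>k\<in>{1..n}. p k \<noteq> 0)"
    obtain G where Gk: "\<forall>m\<in>Poly_Mapping.keys G. good n (2*i + 2*j - 4) m"
      and G: "\<forall>p. (\<forall>k\<in>{1..n}. p k \<noteq> 0) \<longrightarrow> cometric n i j p = mpoly_eval G (\<lambda>k. u_inv n k p)"
      using rep[OF assms ij] by blast
    have w: "\<forall>m\<in>Poly_Mapping.keys G. wt m = 2*i + 2*j - 4" using Gk by (simp add: good_def)
    have nz: "\<forall>k\<in>{1..n}. t * p k \<noteq> 0" using h by simp
    have "cometric n i j (\<lambda>k. t * p k) = mpoly_eval G (\<lambda>k. u_inv n k (\<lambda>i. t * p i))"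
      by (rule G[THEN spec, THEN mp, OF nz])
    also have "\<dots> = mpoly_eval G (\<lambda>k. t ^ (2 * k) * u_inv n k p)" by (simp add: u_inv_scale)
    also have "\<dots> = t ^ (2*i + 2*j - 4) * mpoly_eval G (\<lambda>k. u_inv n k p)" by (rule mpoly_hom[OF w])
    also have "mpoly_eval G (\<lambda>k. u_inv n k p) = cometric n i j p" using G[rule_format, of p] h by simp
    finally show "cometric n i j (\<lambda>k. t * p k) = t ^ (2*i + 2*j - 4) * cometric n i j p" .
  qed
  show "\<forall>p. (\<forall>k\<in>{1..n}. p k \<noteq> 0) \<longrightarrow> cometric n 1 1 p = 4 * (of_nat n ^ 2 - of_nat n)"
  proof (intro allI impI)
    fix p :: "nat \<Rightarrow> complex" assume nz: "\<forall>k\<in>{1..n}. p k \<noteq> 0"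
    have "cometric n 1 1 p = 4 * QQ {1..n} (\<lambda>i. (p i)^2) 0 0"
      using cometric_QQ[OF nz, of 0 0] by simp
    also have "\<dots> = 4 * (of_nat n ^ 2 - of_nat n)"
      by (simp add: QQ_0 esym_0 power2_eq_square algebra_simps)
    finally show "cometric n 1 1 p = 4 * (of_nat n ^ 2 - of_nat n)" .
  qed
qed


end
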